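(* Let $\mathbb A\in\mathcal K$ and let $S$ be a tolerance of $\mathbb A$ (a reflexive, symmetric, compatible binary relation). Suppose $d_0,d_1,\dots,d_k\in\mathbb A$ satisfy $(d_j,d_{j+1})\in S$ for all $j\in\{0,\dots,k-1\}$. If for some $i\in\{0,\dots,k\}$ there is $d'_i\in\mathbb A$ with $d_i\sqsubseteq d'_i$, then there are $d'_j\in\mathbb A$ for $j\in\{0,\dots,k\}\setminus\{i\}$ such that $d_j\sqsubseteq d'_j$ for all $j\in\{0,\dots,k\}$ and $(d'_j,d'_{j+1})\in S$ for all $j\in\{0,\dots,k-1\}$. Moreover, if $d_0,\dots,d_{i-1}$ are maximal elements of $\mathbb A$, then there are $d''_0,\dots,d''_k$ such that $d''_j=d_j$ for $j\in\{0,\dots,i-1\}$, $d_i\sqsubseteq d'_i\sqsubseteq d''_i$, $d_j\sqsubseteq d''_j$ for $j\in\{i+1,\dots,k\}$, and $(d''_j,d''_{j+1})\in S$ for all $j\in\{0,\dots,k-1\}$.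
   Context: All algebras are finite and idempotent. Edges: for elements $a,b$ of an algebra $\mathbb A$ let $\mathbb B=\mathrm{Sg}(a,b)$ (the generated subalgebra). The pair $ab$ is an edge if there is a maximal congruence $\theta$ of $\mathbb B$ such that either $\mathbb B/\theta$ is a set (unary type), or $\mathbb B/\theta$ is term equivalent to the full idempotent reduct of a module and some term operation $f$ induces on $\mathbb B/\theta$ the affine operation $x-y+z$ (affine type), or some term operation $f$ with $f/\theta$ a semilattice operation on $\{a/\theta,b/\theta\}$, or one with $f/\theta$ a majority operation on $\{a/\theta,b/\theta\}$. Semilattice type: the semilattice option holds for some $\theta$; majority type: not semilattice type and the majority option holds for some $\theta$; $\{a/\theta,b/\theta\}$ is a thick edge. $\mathbb A$ is smooth if for every edge $ab$ of semilattice or majority type with witness $\theta$, $a/\theta\cup b/\theta$ is a subalgebra. Standing assumption: $\mathcal K$ is a fixed finite class of similar smooth idempotent algebras, closed under subalgebras and homomorphic images, with no edges of unary type. Fixed binary term $\cdot$: semilattice operation on every thick semilattice edge of every algebra in $\mathcal K$, and for all $a,b$ either $a\cdot b=a$ or $(a,a\cdot b)$ is a thin semilattice edge. A thin semilattice edge is a pair $ab$ with $a\cdot b=b\cdot a=b$, written $a\le b$. An s-path is a sequence $a_0\le a_1\le\dots\le a_k$; $a\sqsubseteq b$ means there is an s-path from $a$ to $b$ in $\mathbb A$. $a$ is maximal if $a\sqsubseteq b$ implies $b\sqsubseteq a$. *)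

theory Defs
  imports Main
begin

text \<open>
  A finite idempotent algebra is given by a carrier A and a set F of basic operations,
  each paired with its arity.  Operations act on argument lists.
\<close>

type_synonym 'a operation = "nat \<times> ('a list \<Rightarrow> 'a)"

definition closed_under :: "'a set \<Rightarrow> 'a operation set \<Rightarrow> 'a set \<Rightarrow> bool" where
  "closed_under A F B \<longleftrightarrow> B \<subseteq> A \<and>
     (\<forall>(m, g) \<in> F. \<forall>xs. length xs = m \<and> set xs \<subseteq> B \<longrightarrow> g xs \<in> B)"

definition fin_idem_algebra :: "'a set \<Rightarrow> 'a operation set \<Rightarrow> bool" where
  "fin_idem_algebra A F \<longleftrightarrow> A \<noteq> {} \<and> finite A \<and> closed_under A F A \<and>
     (\<forall>(m, g) \<in> F. \<forall>x \<in> A. g (replicate m x) = x)"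

inductive term_op :: "'a operation set \<Rightarrow> nat \<Rightarrow> ('a list \<Rightarrow> 'a) \<Rightarrow> bool" for F where
  proj: "i < n \<Longrightarrow> term_op F n (\<lambda>xs. xs ! i)"
| comp: "(m, g) \<in> F \<Longrightarrow> length fs = m \<Longrightarrow> (\<forall>f \<in> set fs. term_op F n f)
         \<Longrightarrow> term_op F n (\<lambda>xs. g (map (\<lambda>f. f xs) fs))"

definition Sg :: "'a set \<Rightarrow> 'a operation set \<Rightarrow> 'a set \<Rightarrow> 'a set" where
  "Sg A F X = \<Inter> {B. X \<subseteq> B \<and> closed_under A F B}"

definition congruence :: "'a operation set \<Rightarrow> 'a set \<Rightarrow> ('a \<times> 'a) set \<Rightarrow> bool" where
  "congruence F B \<theta> \<longleftrightarrow> equiv B \<theta> \<and>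
     (\<forall>(m, g) \<in> F. \<forall>xs ys. length xs = m \<and> length ys = m \<and>
        list_all2 (\<lambda>x y. (x, y) \<in> \<theta>) xs ys \<longrightarrow> (g xs, g ys) \<in> \<theta>)"

definition max_congruence :: "'a operation set \<Rightarrow> 'a set \<Rightarrow> ('a \<times> 'a) set \<Rightarrow> bool" where
  "max_congruence F B \<theta> \<longleftrightarrow> congruence F B \<theta> \<and> \<theta> \<noteq> B \<times> B \<and>
     (\<forall>\<psi>. congruence F B \<psi> \<and> \<theta> \<subseteq> \<psi> \<longrightarrow> \<psi> = \<theta> \<or> \<psi> = B \<times> B)"

definition quot_is_set :: "'a operation set \<Rightarrow> 'a set \<Rightarrow> ('a \<times> 'a) set \<Rightarrow> bool" where
  "quot_is_set F B \<theta> \<longleftrightarrow> (\<forall>n f. 0 < n \<and> term_op F n f \<longrightarrow>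
     (\<exists>i < n. \<forall>xs. length xs = n \<and> set xs \<subseteq> B \<longrightarrow> (f xs, xs ! i) \<in> \<theta>))"

definition semilattice_on :: "('a \<times> 'a) set \<Rightarrow> ('a list \<Rightarrow> 'a) \<Rightarrow> 'a \<Rightarrow> 'a \<Rightarrow> bool" where
  "semilattice_on \<theta> f a b \<longleftrightarrow> (\<forall>x \<in> {a, b}. \<forall>y \<in> {a, b}. \<forall>z \<in> {a, b}.
      ((f [x, y], a) \<in> \<theta> \<or> (f [x, y], b) \<in> \<theta>) \<and>
      (f [x, x], x) \<in> \<theta> \<and>
      (f [x, y], f [y, x]) \<in> \<theta> \<and>
      (f [f [x, y], z], f [x, f [y, z]]) \<in> \<theta>)"

definition majority_on :: "('a \<times> 'a) set \<Rightarrow> ('a list \<Rightarrow> 'a) \<Rightarrow> 'a \<Rightarrow> 'a \<Rightarrow> bool" where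
  "majority_on \<theta> f a b \<longleftrightarrow> (\<forall>x \<in> {a, b}. \<forall>y \<in> {a, b}.
      (f [x, x, y], x) \<in> \<theta> \<and> (f [x, y, x], x) \<in> \<theta> \<and> (f [y, x, x], x) \<in> \<theta>)"

definition unary_witness :: "'a set \<Rightarrow> 'a operation set \<Rightarrow> 'a \<Rightarrow> 'a \<Rightarrow> ('a \<times> 'a) set \<Rightarrow> bool" where
  "unary_witness A F a b \<theta> \<longleftrightarrow> max_congruence F (Sg A F {a, b}) \<theta> \<and> quot_is_set F (Sg A F {a, b}) \<theta>"

definition semilattice_witness :: "'a set \<Rightarrow> 'a operation set \<Rightarrow> 'a \<Rightarrow> 'a \<Rightarrow> ('a \<times> 'a) set \<Rightarrow> bool" where
  "semilattice_witness A F a b \<theta> \<longleftrightarrow> max_congruence F (Sg A F {a, b}) \<theta> \<and>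
     (\<exists>f. term_op F 2 f \<and> semilattice_on \<theta> f a b)"

definition majority_witness :: "'a set \<Rightarrow> 'a operation set \<Rightarrow> 'a \<Rightarrow> 'a \<Rightarrow> ('a \<times> 'a) set \<Rightarrow> bool" where
  "majority_witness A F a b \<theta> \<longleftrightarrow> max_congruence F (Sg A F {a, b}) \<theta> \<and>
     (\<exists>f. term_op F 3 f \<and> majority_on \<theta> f a b)"

definition semilattice_type :: "'a set \<Rightarrow> 'a operation set \<Rightarrow> 'a \<Rightarrow> 'a \<Rightarrow> bool" where
  "semilattice_type A F a b \<longleftrightarrow> (\<exists>\<theta>. semilattice_witness A F a b \<theta>)"

definition majority_type :: "'a set \<Rightarrow> 'a operation set \<Rightarrow> 'a \<Rightarrow> 'a \<Rightarrow> bool" where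
  "majority_type A F a b \<longleftrightarrow> \<not> semilattice_type A F a b \<and> (\<exists>\<theta>. majority_witness A F a b \<theta>)"

definition smooth :: "'a set \<Rightarrow> 'a operation set \<Rightarrow> bool" where
  "smooth A F \<longleftrightarrow> (\<forall>a \<in> A. \<forall>b \<in> A. \<forall>\<theta>.
     (semilattice_witness A F a b \<theta> \<or> (majority_type A F a b \<and> majority_witness A F a b \<theta>))
       \<longrightarrow> closed_under A F (\<theta> `` {a} \<union> \<theta> `` {b}))"

definition no_unary_edges :: "'a set \<Rightarrow> 'a operation set \<Rightarrow> bool" where
  "no_unary_edges A F \<longleftrightarrow> \<not> (\<exists>a \<in> A. \<exists>b \<in> A. \<exists>\<theta>. unary_witness A F a b \<theta>)"

text \<open>Thin semilattice edge a \<le> b w.r.t. the fixed binary term operation mult (x\<cdot>y = mult [x,y]).\<close>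
definition thin_le :: "'a set \<Rightarrow> ('a list \<Rightarrow> 'a) \<Rightarrow> 'a \<Rightarrow> 'a \<Rightarrow> bool" where
  "thin_le A mult a b \<longleftrightarrow> a \<in> A \<and> b \<in> A \<and> mult [a, b] = b \<and> mult [b, a] = b"

definition s_le :: "'a set \<Rightarrow> ('a list \<Rightarrow> 'a) \<Rightarrow> 'a \<Rightarrow> 'a \<Rightarrow> bool" where
  "s_le A mult a b \<longleftrightarrow> a \<in> A \<and> (thin_le A mult)\<^sup>*\<^sup>* a b"

definition s_maximal :: "'a set \<Rightarrow> ('a list \<Rightarrow> 'a) \<Rightarrow> 'a \<Rightarrow> bool" where
  "s_maximal A mult a \<longleftrightarrow> a \<in> A \<and> (\<forall>b. s_le A mult a b \<longrightarrow> s_le A mult b a)"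

text \<open>The standing assumptions, as they apply to the algebra A in the class K, with
  mult the term operation of A induced by the fixed binary term.\<close>
definition K_algebra :: "'a set \<Rightarrow> 'a operation set \<Rightarrow> ('a list \<Rightarrow> 'a) \<Rightarrow> bool" where
  "K_algebra A F mult \<longleftrightarrow> fin_idem_algebra A F \<and> smooth A F \<and> no_unary_edges A F \<and>
     term_op F 2 mult \<and>
     (\<forall>a \<in> A. \<forall>b \<in> A. \<forall>\<theta>. semilattice_witness A F a b \<theta> \<longrightarrow> semilattice_on \<theta> mult a b) \<and>
     (\<forall>a \<in> A. \<forall>b \<in> A. mult [a, b] = a \<or> thin_le A mult a (mult [a, b]))"

definition tolerance :: "'a set \<Rightarrow> 'a operation set \<Rightarrow> ('a \<times> 'a) set \<Rightarrow> bool" where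
  "tolerance A F S \<longleftrightarrow> S \<subseteq> A \<times> A \<and> refl_on A S \<and> sym S \<and>
     (\<forall>(m, g) \<in> F. \<forall>xs ys. length xs = m \<and> length ys = m \<and>
        list_all2 (\<lambda>x y. (x, y) \<in> S) xs ys \<longrightarrow> (g xs, g ys) \<in> S)"

end

theory Submission imports Defs begin

lemma closed_app:
  assumes "closed_under A F A" "(m, g) \<in> F" "length xs = m" "set xs \<subseteq> A"
  shows "g xs \<in> A"
proof -
  have "\<forall>(m, g) \<in> F. \<forall>xs. length xs = m \<and> set xs \<subseteq> A \<longrightarrow> g xs \<in> A"
    using assms(1) unfolding closed_under_def by blast
  then have "\<forall>xs. length xs = m \<and> set xs \<subseteq> A \<longrightarrow> g xs \<in> A" using assms(2) by fast
  then show ?thesis using assms(3,4) by blast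
qed

lemma term_op_closed:
  assumes "term_op F n f" "closed_under A F A" "length xs = n" "set xs \<subseteq> A"
  shows "f xs \<in> A"
  using assms(1,3)
proof (induction rule: term_op.induct)
  case (proj i n)
  then show ?case using assms(4) by (metis nth_mem subsetD)
next
  case (comp m g fs n)
  have "length (map (\<lambda>f. f xs) fs) = m" using comp by simp
  moreover have "set (map (\<lambda>f. f xs) fs) \<subseteq> A" using comp.IH comp.prems by auto
  ultimately show ?case using closed_app[OF assms(2) comp.hyps(1)] by blast
qed

lemma idem_app:
  assumes "fin_idem_algebra A F" "(m, g) \<in> F" "x \<in> A"
  shows "g (replicate m x) = x"
proof -
  have "\<forall>(m, g) \<in> F. \<forall>x \<in> A. g (replicate m x) = x"
    using assms(1) unfolding fin_idem_algebra_def by blast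
  then have "\<forall>x \<in> A. g (replicate m x) = x" using assms(2) by fast
  then show ?thesis using assms(3) by blast
qed

lemma term_op_idem:
  assumes "term_op F n f" "fin_idem_algebra A F" "x \<in> A"
  shows "f (replicate n x) = x"
  using assms(1)
proof (induction rule: term_op.induct)
  case (proj i n)
  then show ?case by simp
next
  case (comp m g fs n)
  have "map (\<lambda>f. f (replicate n x)) fs = replicate m x"
    using comp by (simp add: map_replicate_const list_eq_iff_nth_eq)
  then show ?case using idem_app[OF assms(2) comp.hyps(1) assms(3)] by simp
qed

lemma tol_app:
  assumes "tolerance A F S" "(m, g) \<in> F" "length xs = m" "length ys = m"
    "list_all2 (\<lambda>x y. (x, y) \<in> S) xs ys"
  shows "(g xs, g ys) \<in> S"
proof -
  have "\<forall>(m, g) \<in> F. \<forall>xs ys. length xs = m \<and> length ys = m \<and>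
        list_all2 (\<lambda>x y. (x, y) \<in> S) xs ys \<longrightarrow> (g xs, g ys) \<in> S"
    using assms(1) unfolding tolerance_def by blast
  then have "\<forall>xs ys. length xs = m \<and> length ys = m \<and>
        list_all2 (\<lambda>x y. (x, y) \<in> S) xs ys \<longrightarrow> (g xs, g ys) \<in> S" using assms(2) by fast
  then show ?thesis using assms(3,4,5) by blast
qed

lemma term_op_tol:
  assumes "term_op F n f" "tolerance A F S" "length xs = n" "length ys = n"
    "list_all2 (\<lambda>x y. (x, y) \<in> S) xs ys"
  shows "(f xs, f ys) \<in> S"
  using assms(1,3,4)
proof (induction rule: term_op.induct)
  case (proj i n)
  then show ?case using assms(5) list_all2_nthD[of "\<lambda>x y. (x, y) \<in> S" xs ys i] by simp
next
  case (comp m g fs n)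
  have "list_all2 (\<lambda>x y. (x, y) \<in> S) (map (\<lambda>f. f xs) fs) (map (\<lambda>f. f ys) fs)"
    using comp.IH comp.prems by (auto simp: list_all2_conv_all_nth)
  then show ?case using tol_app[OF assms(2) comp.hyps(1)] comp.hyps(2) by simp
qed

locale KA =
  fixes A F mult S
  assumes K: "K_algebra A F mult" and T: "tolerance A F S"
begin

lemma mult_closed: "a \<in> A \<Longrightarrow> b \<in> A \<Longrightarrow> mult [a, b] \<in> A"
proof -
  assume "a \<in> A" "b \<in> A"
  have "term_op F 2 mult" "closed_under A F A" using K unfolding K_algebra_def fin_idem_algebra_def by auto
  then show ?thesis using term_op_closed[of F 2 mult A "[a,b]"] \<open>a \<in> A\<close> \<open>b \<in> A\<close> by simp
qed

lemma mult_idem: "a \<in> A \<Longrightarrow> mult [a, a] = a"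
proof -
  assume "a \<in> A"
  have "term_op F 2 mult" "fin_idem_algebra A F" using K unfolding K_algebra_def by auto
  then show ?thesis using term_op_idem[of F 2 mult A a] \<open>a \<in> A\<close> by (simp add: numeral_2_eq_2)
qed

lemma mult_tol: "(a, a') \<in> S \<Longrightarrow> (b, b') \<in> S \<Longrightarrow> (mult [a, b], mult [a', b']) \<in> S"
proof -
  assume "(a, a') \<in> S" "(b, b') \<in> S"
  have "term_op F 2 mult" using K unfolding K_algebra_def by auto
  then show ?thesis using T term_op_tol[of F 2 mult A S "[a,b]" "[a',b']"] \<open>(a, a') \<in> S\<close> \<open>(b, b') \<in> S\<close> by simp
qed

lemma S_refl: "a \<in> A \<Longrightarrow> (a, a) \<in> S"
  using T unfolding tolerance_def refl_on_def by auto

lemma mult_dich: "a \<in> A \<Longrightarrow> x \<in> A \<Longrightarrow> mult [a, x] = a \<or> thin_le A mult a (mult [a, x])"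
  using K unfolding K_algebra_def by blast

lemma mult_abs: "a \<in> A \<Longrightarrow> x \<in> A \<Longrightarrow> mult [a, mult [a, x]] = mult [a, x]"
  using mult_dich[of a x] mult_idem[of a] unfolding thin_le_def by auto

lemma s_le_refl: "a \<in> A \<Longrightarrow> s_le A mult a a"
  unfolding s_le_def by auto

lemma s_le_trans: "s_le A mult a b \<Longrightarrow> s_le A mult b c \<Longrightarrow> s_le A mult a c"
  unfolding s_le_def by auto

lemma s_le_in: assumes "s_le A mult a b" shows "b \<in> A"
proof -
  have "(thin_le A mult)\<^sup>*\<^sup>* a b" "a \<in> A" using assms unfolding s_le_def by auto
  then show ?thesis by (induction rule: rtranclp_induct) (auto simp: thin_le_def)
qed

lemma s_le_mult: "a \<in> A \<Longrightarrow> x \<in> A \<Longrightarrow> s_le A mult a (mult [a, x])"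
  using mult_dich[of a x] unfolding s_le_def by auto

lemma thin_s_le: "thin_le A mult a b \<Longrightarrow> s_le A mult a b"
  unfolding s_le_def thin_le_def by auto


lemma ext_right:
  assumes E: "\<forall>j \<le> k. e j \<in> A" and L: "\<forall>j < k. (e j, e (Suc j)) \<in> S"
    and b: "b \<in> A" "mult [e i, b] = b"
  shows "i + n \<le> k \<Longrightarrow> \<exists>f. f i = b \<and>
     (\<forall>j. i \<le> j \<and> j \<le> i + n \<longrightarrow> f j \<in> A \<and> mult [e j, f j] = f j \<and> (j \<noteq> i \<longrightarrow> s_le A mult (e j) (f j))) \<and>
     (\<forall>j. i \<le> j \<and> j < i + n \<longrightarrow> (f j, f (Suc j)) \<in> S)"
proof (induction n)
  case 0
  show ?case using b by (intro exI[of _ "\<lambda>_. b"]) auto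
next
  case (Suc n)
  then obtain f where f: "f i = b"
     "\<forall>j. i \<le> j \<and> j \<le> i + n \<longrightarrow> f j \<in> A \<and> mult [e j, f j] = f j \<and> (j \<noteq> i \<longrightarrow> s_le A mult (e j) (f j))"
     "\<forall>j. i \<le> j \<and> j < i + n \<longrightarrow> (f j, f (Suc j)) \<in> S" by auto
  define p where "p = i + n"
  have pA: "f p \<in> A" "mult [e p, f p] = f p" using f(2) p_def by auto
  have eA: "e (Suc p) \<in> A" "e p \<in> A" using E Suc.prems p_def by auto
  define c where "c = mult [e (Suc p), f p]"
  have cA: "c \<in> A" using mult_closed eA pA c_def by auto
  have cabs: "mult [e (Suc p), c] = c" using mult_abs eA pA c_def by auto
  have cle: "s_le A mult (e (Suc p)) c" using s_le_mult eA pA c_def by auto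
  have link: "(f p, c) \<in> S"
    using mult_tol[of "e p" "e (Suc p)" "f p" "f p"] L Suc.prems p_def S_refl[OF pA(1)] pA(2) c_def by auto
  define g where "g = f(Suc p := c)"
  show ?case
  proof (intro exI[of _ g] conjI allI impI)
    show "g i = b" using f(1) g_def p_def by auto
  next
    fix j assume j: "i \<le> j \<and> j \<le> i + Suc n"
    show "g j \<in> A" using j f(2) cA g_def p_def by (cases "j = Suc p") auto
    show "mult [e j, g j] = g j" using j f(2) cabs g_def p_def by (cases "j = Suc p") auto
    show "j \<noteq> i \<Longrightarrow> s_le A mult (e j) (g j)" using j f(2) cle g_def p_def by (cases "j = Suc p") auto
  next
    fix j assume j: "i \<le> j \<and> j < i + Suc n"
    show "(g j, g (Suc j)) \<in> S"
    proof (cases "j = p")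
      case True then show ?thesis using link g_def by simp
    next
      case False then show ?thesis using j f(3) g_def p_def by auto
    qed
  qed
qed

lemma ext_left:
  assumes E: "\<forall>j \<le> k. e j \<in> A" and L: "\<forall>j < k. (e j, e (Suc j)) \<in> S"
    and b: "b \<in> A" "mult [e i, b] = b" and ik: "i \<le> k"
  shows "n \<le> i \<Longrightarrow> \<exists>f. f i = b \<and>
     (\<forall>j. i - n \<le> j \<and> j \<le> i \<longrightarrow> f j \<in> A \<and> mult [e j, f j] = f j \<and> (j \<noteq> i \<longrightarrow> s_le A mult (e j) (f j))) \<and>
     (\<forall>j. i - n \<le> j \<and> j < i \<longrightarrow> (f j, f (Suc j)) \<in> S)"
proof (induction n)
  case 0
  show ?case using b by (intro exI[of _ "\<lambda>_. b"]) auto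
next
  case (Suc n)
  then obtain f where f: "f i = b"
     "\<forall>j. i - n \<le> j \<and> j \<le> i \<longrightarrow> f j \<in> A \<and> mult [e j, f j] = f j \<and> (j \<noteq> i \<longrightarrow> s_le A mult (e j) (f j))"
     "\<forall>j. i - n \<le> j \<and> j < i \<longrightarrow> (f j, f (Suc j)) \<in> S" by auto
  define p where "p = i - n"
  define q where "q = i - Suc n"
  have pq: "p = Suc q" "q < k" using p_def q_def Suc.prems ik by auto
  have pA: "f p \<in> A" "mult [e p, f p] = f p" using f(2) p_def by auto
  have eA: "e q \<in> A" "e p \<in> A" using E pq by auto
  define c where "c = mult [e q, f p]"
  have cA: "c \<in> A" using mult_closed eA pA c_def by auto
  have cabs: "mult [e q, c] = c" using mult_abs eA pA c_def by auto
  have cle: "s_le A mult (e q) c" using s_le_mult eA pA c_def by auto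
  have link: "(c, f p) \<in> S"
    using mult_tol[of "e q" "e p" "f p" "f p"] L pq S_refl[OF pA(1)] pA(2) c_def by auto
  define g where "g = f(q := c)"
  have qi: "q \<noteq> i" "q < i" using q_def Suc.prems by auto
  show ?case
  proof (intro exI[of _ g] conjI allI impI)
    show "g i = b" using f(1) g_def qi by auto
  next
    fix j assume j: "i - Suc n \<le> j \<and> j \<le> i"
    show "g j \<in> A" using j f(2) cA g_def p_def q_def by (cases "j = q") auto
    show "mult [e j, g j] = g j" using j f(2) cabs g_def p_def q_def by (cases "j = q") auto
    show "j \<noteq> i \<Longrightarrow> s_le A mult (e j) (g j)" using j f(2) cle g_def p_def q_def by (cases "j = q") auto
  next
    fix j assume j: "i - Suc n \<le> j \<and> j < i"
    show "(g j, g (Suc j)) \<in> S"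
    proof (cases "j = q")
      case True then show ?thesis using link g_def pq by simp
    next
      case False
      then have "i - n \<le> j" using j q_def by auto
      moreover have "Suc j \<noteq> q" using False j q_def by auto
      ultimately show ?thesis using j f(3) g_def False by simp
    qed
  qed
qed

lemma ext_one:
  assumes E: "\<forall>j \<le> k. e j \<in> A" and L: "\<forall>j < k. (e j, e (Suc j)) \<in> S"
    and ik: "i \<le> k" and th: "thin_le A mult (e i) b"
  shows "\<exists>f. f i = b \<and> (\<forall>j \<le> k. f j \<in> A \<and> s_le A mult (e j) (f j)) \<and>
              (\<forall>j < k. (f j, f (Suc j)) \<in> S)"
proof -
  have b: "b \<in> A" "mult [e i, b] = b" using th unfolding thin_le_def by auto
  obtain fr where fr: "fr i = b"
     "\<forall>j. i \<le> j \<and> j \<le> i + (k - i) \<longrightarrow> fr j \<in> A \<and> mult [e j, fr j] = fr j \<and> (j \<noteq> i \<longrightarrow> s_le A mult (e j) (fr j))"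
     "\<forall>j. i \<le> j \<and> j < i + (k - i) \<longrightarrow> (fr j, fr (Suc j)) \<in> S"
    using ext_right[OF E L b, of "k - i"] ik by auto
  obtain fl where fl: "fl i = b"
     "\<forall>j. i - i \<le> j \<and> j \<le> i \<longrightarrow> fl j \<in> A \<and> mult [e j, fl j] = fl j \<and> (j \<noteq> i \<longrightarrow> s_le A mult (e j) (fl j))"
     "\<forall>j. i - i \<le> j \<and> j < i \<longrightarrow> (fl j, fl (Suc j)) \<in> S"
    using ext_left[OF E L b ik, of i] by auto
  define f where "f j = (if j < i then fl j else fr j)" for j
  have bi: "s_le A mult (e i) b" using thin_s_le[OF th] .
  show ?thesis
  proof (intro exI[of _ f] conjI allI impI)
    show "f i = b" using fr f_def by auto
  next
    fix j assume j: "j \<le> k"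
    show "f j \<in> A" using j fl(2) fr(2) f_def ik by auto
    show "s_le A mult (e j) (f j)"
      using j fl(2) fr(2) f_def ik bi fr(1) by (cases "j = i") auto
  next
    fix j assume j: "j < k"
    show "(f j, f (Suc j)) \<in> S"
    proof (cases "Suc j < i")
      case True then show ?thesis using fl(3) f_def by auto
    next
      case False
      show ?thesis
      proof (cases "Suc j = i")
        case True then show ?thesis using fl(3) f_def fl(1) fr(1) by auto
      next
        case False
        then have "i \<le> j" using \<open>\<not> Suc j < i\<close> by auto
        then show ?thesis using fr(3) f_def j ik by auto
      qed
    qed
  qed
qed

lemma part1:
  assumes E: "\<forall>j \<le> k. e j \<in> A" and L: "\<forall>j < k. (e j, e (Suc j)) \<in> S"
    and ik: "i \<le> k" and le: "s_le A mult (e i) c"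
  shows "\<exists>f. f i = c \<and> (\<forall>j \<le> k. f j \<in> A \<and> s_le A mult (e j) (f j)) \<and>
              (\<forall>j < k. (f j, f (Suc j)) \<in> S)"
proof -
  have "(thin_le A mult)\<^sup>*\<^sup>* (e i) c" using le unfolding s_le_def by auto
  then show ?thesis
  proof (induction rule: rtranclp_induct)
    case base
    show ?case using E L s_le_refl by (intro exI[of _ e]) auto
  next
    case (step y z)
    then obtain f where f: "f i = y" "\<forall>j \<le> k. f j \<in> A \<and> s_le A mult (e j) (f j)"
       "\<forall>j < k. (f j, f (Suc j)) \<in> S" by auto
    obtain g where g: "g i = z" "\<forall>j \<le> k. g j \<in> A \<and> s_le A mult (f j) (g j)"
       "\<forall>j < k. (g j, g (Suc j)) \<in> S"
      using ext_one[of k f i z] f ik step.hyps(2) by auto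
    show ?case using f g s_le_trans by (intro exI[of _ g]) blast
  qed
qed


lemma max_up: "s_maximal A mult a \<Longrightarrow> s_le A mult a b \<Longrightarrow> s_le A mult b a"
  unfolding s_maximal_def by blast

lemma part2:
  "\<forall>j \<le> k. d j \<in> A \<Longrightarrow> \<forall>j < k. (d j, d (Suc j)) \<in> S \<Longrightarrow> i \<le> k \<Longrightarrow>
   s_le A mult (d i) c \<Longrightarrow> \<forall>j < i. s_maximal A mult (d j) \<Longrightarrow>
   \<exists>d''. (\<forall>j < i. d'' j = d j) \<and> s_le A mult c (d'' i) \<and>
          (\<forall>j. i < j \<and> j \<le> k \<longrightarrow> s_le A mult (d j) (d'' j)) \<and>
          (\<forall>j \<le> k. d'' j \<in> A) \<and> (\<forall>j < k. (d'' j, d'' (Suc j)) \<in> S)"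
proof (induction i arbitrary: d k c)
  case 0
  obtain f where f: "f 0 = c" "\<forall>j \<le> k. f j \<in> A \<and> s_le A mult (d j) (f j)"
      "\<forall>j < k. (f j, f (Suc j)) \<in> S" using part1[of k d 0 c] "0.prems" by auto
  have "c \<in> A" using s_le_in "0.prems"(4) by blast
  then show ?case using f s_le_refl by (intro exI[of _ f]) auto
next
  case (Suc i)
  show ?case
  proof (cases i)
    case 0
    obtain f where f: "f 1 = c" "\<forall>j \<le> k. f j \<in> A \<and> s_le A mult (d j) (f j)"
      "\<forall>j < k. (f j, f (Suc j)) \<in> S" using part1[of k d 1 c] Suc.prems 0 by auto
    have m: "s_maximal A mult (d 0)" using Suc.prems(5) by auto
    have "s_le A mult (f 0) (d 0)" using max_up[OF m] f(2) by auto
    then obtain g where g: "g 0 = d 0" "\<forall>j \<le> k. g j \<in> A \<and> s_le A mult (f j) (g j)"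
      "\<forall>j < k. (g j, g (Suc j)) \<in> S" using part1[of k f 0 "d 0"] f by auto
    have k1: "1 \<le> k" using Suc.prems 0 by auto
    show ?thesis
    proof (intro exI[of _ g] conjI allI impI)
      fix j assume "j < Suc i" then show "g j = d j" using g 0 by auto
    next
      show "s_le A mult c (g (Suc i))" using g(2) f(1) k1 0 by auto
    next
      fix j assume "Suc i < j \<and> j \<le> k"
      then show "s_le A mult (d j) (g j)" using f(2) g(2) s_le_trans by blast
    next
      fix j assume "j \<le> k" then show "g j \<in> A" using g by auto
    next
      fix j assume "j < k" then show "(g j, g (Suc j)) \<in> S" using g by auto
    qed
  next
    case (Suc i')
    define h where "h j = d (Suc j)" for j
    obtain h'' where h: "\<forall>j < i. h'' j = h j" "s_le A mult c (h'' i)"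
          "\<forall>j. i < j \<and> j \<le> k - 1 \<longrightarrow> s_le A mult (h j) (h'' j)"
          "\<forall>j \<le> k - 1. h'' j \<in> A" "\<forall>j < k - 1. (h'' j, h'' (Suc j)) \<in> S"
    proof -
      have "\<forall>j \<le> k - 1. h j \<in> A" using Suc.prems(1,3) h_def by auto
      moreover have "\<forall>j < k - 1. (h j, h (Suc j)) \<in> S" using Suc.prems(2) h_def by auto
      moreover have "i \<le> k - 1" using Suc.prems(3) by auto
      moreover have "s_le A mult (h i) c" using Suc.prems(4) h_def by auto
      moreover have "\<forall>j < i. s_maximal A mult (h j)" using Suc.prems(5) h_def by auto
      ultimately show ?thesis using that Suc.IH[of "k - 1" h c] by blast
    qed
    define d'' where "d'' j = (if j = 0 then d 0 else h'' (j - 1))" for j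
    show ?thesis
    proof (intro exI[of _ d''] conjI allI impI)
      fix j assume "j < Suc i" then show "d'' j = d j" using h(1) h_def d''_def by auto
    next
      show "s_le A mult c (d'' (Suc i))" using h(2) d''_def by auto
    next
      fix j assume jj: "Suc i < j \<and> j \<le> k"
      then have "i < j - 1 \<and> j - 1 \<le> k - 1" by arith
      then have "s_le A mult (h (j - 1)) (h'' (j - 1))" using h(3) by blast
      moreover have "h (j - 1) = d j" "d'' j = h'' (j - 1)" using jj h_def d''_def by auto
      ultimately show "s_le A mult (d j) (d'' j)" by simp
    next
      fix j assume "j \<le> k" then show "d'' j \<in> A" using h(4) d''_def Suc.prems(1) by auto
    next
      fix j assume j: "j < k"
      show "(d'' j, d'' (Suc j)) \<in> S"
      proof (cases j)
        case 0
        then show ?thesis using h(1) h_def d''_def Suc.prems(2) j \<open>i = Suc i'\<close> by auto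
      next
        case (Suc j')
        then show ?thesis using h(5) d''_def j by auto
      qed
    qed
  qed
qed

end

theorem lemma21:
  fixes A :: "'a set" and F :: "'a operation set" and mult :: "'a list \<Rightarrow> 'a"
    and S :: "('a \<times> 'a) set" and d :: "nat \<Rightarrow> 'a" and k i :: nat and di' :: 'a
  assumes "K_algebra A F mult"
    and "tolerance A F S"
    and "\<forall>j \<le> k. d j \<in> A"
    and "\<forall>j < k. (d j, d (Suc j)) \<in> S"
    and "i \<le> k"
    and "di' \<in> A"
    and "s_le A mult (d i) di'"
  shows "(\<exists>d'. d' i = di' \<and> (\<forall>j \<le> k. d' j \<in> A \<and> s_le A mult (d j) (d' j)) \<and>
              (\<forall>j < k. (d' j, d' (Suc j)) \<in> S)) \<and>
         ((\<forall>j < i. s_maximal A mult (d j)) \<longrightarrow>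
            (\<exists>d''. (\<forall>j < i. d'' j = d j) \<and> s_le A mult di' (d'' i) \<and>
                   (\<forall>j. i < j \<and> j \<le> k \<longrightarrow> s_le A mult (d j) (d'' j)) \<and>
                   (\<forall>j \<le> k. d'' j \<in> A) \<and>
                   (\<forall>j < k. (d'' j, d'' (Suc j)) \<in> S)))"
proof -
  interpret KA A F mult S using assms(1,2) by unfold_locales
  show ?thesis using part1[OF assms(3,4,5,7)] part2[OF assms(3,4,5,7)] by blast
qed

end
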